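(* For all integers $q\ge1$ and $n\ge1$, the number of nonattacking placements of $q$ unlabelled semibishops on the $n\times n$ triangular board is $$u^{\mathcal T}_{\mathsf Q^{01}}(q;n)=(-1)^q s(n+1,n+1-q).$$
   Context: The $n\times n$ triangular board is the set $\{(x,y)\in\mathbb Z^2:1\le x\le y-1\le n\}$ (the integral points in the interior of the $(n+2)$-fold dilation of the triangle $\{0\le x\le y\le1\}$). The semibishop has the single basic move $(1,1)$: two pieces at positions $z,z'$ attack each other if $z'-z$ is an integer multiple of $(1,1)$ (including $z=z'$). $u^{\mathcal T}_{\mathsf Q^{01}}(q;n)$ counts the sets of $q$ positions on the triangular board no two of which attack each other. $s(a,b)$ is the signed Stirling number of the first kind. *)

theory Defs
  imports Main "HOL-Combinatorics.Stirling"
begin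

definition tri_board :: "nat \<Rightarrow> (int \<times> int) set" where
  "tri_board n = {(x, y). 1 \<le> x \<and> x \<le> y - 1 \<and> y - 1 \<le> int n}"

definition semibishop_attacks :: "int \<times> int \<Rightarrow> int \<times> int \<Rightarrow> bool" where
  "semibishop_attacks z z' \<longleftrightarrow> (\<exists>k::int. fst z' - fst z = k \<and> snd z' - snd z = k)"

definition nonattacking :: "(int \<times> int) set \<Rightarrow> bool" where
  "nonattacking S \<longleftrightarrow> (\<forall>z\<in>S. \<forall>z'\<in>S. z \<noteq> z' \<longrightarrow> \<not> semibishop_attacks z z')"

definition u_T_Q01 :: "nat \<Rightarrow> nat \<Rightarrow> nat" where
  "u_T_Q01 q n = card {S. S \<subseteq> tri_board n \<and> card S = q \<and> nonattacking S}"

definition signed_stirling1 :: "int \<Rightarrow> int \<Rightarrow> int" where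
  "signed_stirling1 a b =
     (if a < 0 \<or> b < 0 then 0
      else (-1) ^ (nat a - nat b) * int (stirling (nat a) (nat b)))"

end

theory Submission
  imports Defs
begin

definition dg :: "int \<times> int \<Rightarrow> int" where "dg z = snd z - fst z"

lemma nonatt_iff: "nonattacking S \<longleftrightarrow> inj_on dg S"
proof -
  have "semibishop_attacks z z' \<longleftrightarrow> dg z = dg z'" for z z'
    unfolding semibishop_attacks_def dg_def by auto
  thus ?thesis unfolding nonattacking_def inj_on_def by blast
qed

definition AA :: "nat \<Rightarrow> nat \<Rightarrow> (int \<times> int) set set" where
  "AA n q = {S. S \<subseteq> tri_board n \<and> card S = q \<and> inj_on dg S}"

lemma u_AA: "u_T_Q01 q n = card (AA n q)"
  unfolding u_T_Q01_def AA_def nonatt_iff by simp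

lemma finite_board: "finite (tri_board n)"
proof -
  have "tri_board n \<subseteq> {1..int n+1} \<times> {1..int n+1}" unfolding tri_board_def by auto
  thus ?thesis by (rule finite_subset) auto
qed

lemma AA_0: "card (AA n 0) = 1"
proof -
  have "AA n 0 = {{}}"
  proof
    show "AA n 0 \<subseteq> {{}}"
    proof
      fix S assume "S \<in> AA n 0"
      hence "S \<subseteq> tri_board n" "card S = 0" unfolding AA_def by auto
      moreover have "finite S" using calculation(1) finite_board by (rule finite_subset)
      ultimately show "S \<in> {{}}" by simp
    qed
    show "{{}} \<subseteq> AA n 0" unfolding AA_def by simp
  qed
  thus ?thesis by simp
qed

lemma AA_0_Suc: "card (AA 0 (Suc q)) = 0"
proof -
  have "tri_board 0 = {}" unfolding tri_board_def by auto
  hence "AA 0 (Suc q) = {}" unfolding AA_def by auto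
  thus ?thesis by simp
qed

lemma AA_rec: "card (AA (Suc n) (Suc q)) = card (AA n (Suc q)) + (Suc n) * card (AA n q)"
proof -
  define B where "B = tri_board (Suc n)"
  define D where "D = {z \<in> B. dg z = 1}"
  define R where "R = {z \<in> B. dg z \<noteq> 1}"
  define h :: "int \<times> int \<Rightarrow> int \<times> int" where "h z = (fst z, snd z - 1)" for z
  define h' :: "int \<times> int \<Rightarrow> int \<times> int" where "h' z = (fst z, snd z + 1)" for z
  have finB: "finite B" unfolding B_def by (rule finite_board)
  have hh': "h (h' z) = z" for z unfolding h_def h'_def by simp
  have injh: "inj h" unfolding inj_def h_def by auto
  have dgh: "dg (h z) = dg z - 1" for z unfolding dg_def h_def by simp
  have hR: "h ` R = tri_board n"
  proof
    show "h ` R \<subseteq> tri_board n" unfolding R_def B_def tri_board_def h_def dg_def by auto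
    show "tri_board n \<subseteq> h ` R"
    proof
      fix z assume z: "z \<in> tri_board n"
      have "h' z \<in> R" using z unfolding R_def B_def tri_board_def h'_def dg_def by auto
      thus "z \<in> h ` R" using hh'[of z] by (metis image_eqI)
    qed
  qed
  define A0 where "A0 = {S. S \<subseteq> R \<and> card S = Suc q \<and> inj_on dg S}"
  define A1 where "A1 = {S \<in> AA (Suc n) (Suc q). S \<inter> D \<noteq> {}}"
  have split: "AA (Suc n) (Suc q) = A0 \<union> A1" and disj: "A0 \<inter> A1 = {}"
  proof -
    have "R \<subseteq> B" unfolding R_def by blast
    have "S \<subseteq> R \<longleftrightarrow> S \<subseteq> B \<and> S \<inter> D = {}" for S
      unfolding R_def D_def by blast
    thus "AA (Suc n) (Suc q) = A0 \<union> A1" "A0 \<inter> A1 = {}"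
      unfolding AA_def A0_def A1_def B_def by blast+
  qed
  have finAA: "finite (AA m k)" for m k
  proof -
    have "AA m k \<subseteq> Pow (tri_board m)" unfolding AA_def by auto
    thus ?thesis using finite_board by (metis finite_Pow_iff finite_subset)
  qed
  have finA0: "finite A0" and finA1: "finite A1"
    using finAA[of "Suc n" "Suc q"] split by auto
  have cardh: "card (h ` S) = card S" for S
    using card_image[OF inj_on_subset[OF injh subset_UNIV]] .
  have imgAA: "image h ` {S. S \<subseteq> R \<and> card S = k \<and> inj_on dg S} = AA n k" for k
  proof
    show "image h ` {S. S \<subseteq> R \<and> card S = k \<and> inj_on dg S} \<subseteq> AA n k"
    proof
      fix T assume "T \<in> image h ` {S. S \<subseteq> R \<and> card S = k \<and> inj_on dg S}"
      then obtain S where S: "S \<subseteq> R" "card S = k" "inj_on dg S" and TS: "T = h ` S" by blast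
      have "T \<subseteq> tri_board n" using S(1) hR TS by blast
      moreover have "card T = k" using S(2) TS cardh by simp
      moreover have "inj_on dg T"
      proof (rule inj_onI)
        fix a b assume a: "a \<in> T" and b: "b \<in> T" and e: "dg a = dg b"
        obtain a' where a': "a' \<in> S" "a = h a'" using a TS by blast
        obtain b' where b': "b' \<in> S" "b = h b'" using b TS by blast
        have "dg a' = dg b'" using e a' b' dgh by simp
        hence "a' = b'" using S(3) a'(1) b'(1) by (simp add: inj_on_eq_iff)
        thus "a = b" using a' b' by simp
      qed
      ultimately show "T \<in> AA n k" unfolding AA_def by blast
    qed
    show "AA n k \<subseteq> image h ` {S. S \<subseteq> R \<and> card S = k \<and> inj_on dg S}"
    proof
      fix T assume T: "T \<in> AA n k"
      hence T1: "T \<subseteq> tri_board n" "card T = k" "inj_on dg T" unfolding AA_def by auto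
      define S where "S = h' ` T"
      have hS: "h ` S = T" unfolding S_def image_image hh' by simp
      have "S \<subseteq> R"
      proof
        fix z assume "z \<in> S"
        then obtain w where w: "w \<in> T" "z = h' w" unfolding S_def by blast
        have "w \<in> tri_board n" using w T1 by blast
        thus "z \<in> R" using w unfolding R_def B_def tri_board_def h'_def dg_def by auto
      qed
      moreover have "card S = k" using T1(2) hS cardh[of S] by simp
      moreover have "inj_on dg S"
      proof (rule inj_onI)
        fix a b assume ab: "a \<in> S" "b \<in> S" "dg a = dg b"
        have "dg (h a) = dg (h b)" using ab(3) dgh by simp
        moreover have "h a \<in> T" "h b \<in> T" using ab hS by auto
        ultimately have "h a = h b" using T1(3) by (simp add: inj_on_eq_iff)
        thus "a = b" using injh by (simp add: inj_eq)
      qed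
      ultimately have "S \<in> {S. S \<subseteq> R \<and> card S = k \<and> inj_on dg S}" by blast
      thus "T \<in> image h ` {S. S \<subseteq> R \<and> card S = k \<and> inj_on dg S}" using hS by blast
    qed
  qed
  have injimg: "inj_on (image h) X" for X by (rule inj_onI) (simp add: inj_image_eq_iff[OF injh])
  have cA0: "card A0 = card (AA n (Suc q))"
    using card_image[OF injimg[of A0]] imgAA[of "Suc q"] unfolding A0_def by simp
  define A' where "A' = {T. T \<subseteq> R \<and> card T = q \<and> inj_on dg T}"
  have "card A' = card (AA n q)"
    using card_image[OF injimg[of A']] imgAA[of q] unfolding A'_def by simp
  moreover have cD: "card D = Suc n"
  proof -
    have "D = (\<lambda>x. (x, x+1)) ` {1..int n + 1}"
    proof
      show "D \<subseteq> (\<lambda>x. (x, x+1)) ` {1..int n + 1}"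
      proof
        fix z assume z: "z \<in> D"
        obtain a b where ab: "z = (a, b)" by force
        have "b = a + 1" "1 \<le> a" "a \<le> int n + 1"
          using z ab unfolding D_def B_def tri_board_def dg_def by auto
        thus "z \<in> (\<lambda>x. (x, x+1)) ` {1..int n + 1}" using ab by auto
      qed
      show "(\<lambda>x. (x, x+1)) ` {1..int n + 1} \<subseteq> D"
        unfolding D_def B_def tri_board_def dg_def by auto
    qed
    moreover have "inj_on (\<lambda>x::int. (x, x+1)) {1..int n + 1}" by (auto simp: inj_on_def)
    ultimately show ?thesis by (simp add: card_image)
  qed
  moreover have "card A1 = card D * card A'"
  proof -
    define F where "F = (\<lambda>(p, T). insert p (T :: (int \<times> int) set))"
    have DR: "D \<inter> R = {}" unfolding D_def R_def by auto
    have finR: "finite R" using finB unfolding R_def by auto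
    have "inj_on F (D \<times> A')"
    proof (rule inj_onI)
      fix x y assume x: "x \<in> D \<times> A'" and y: "y \<in> D \<times> A'" and e: "F x = F y"
      obtain p T where pT: "x = (p, T)" by (cases x) blast
      obtain p' T' where pT': "y = (p', T')" by (cases y) blast
      have "p \<in> D" "T \<subseteq> R" "p' \<in> D" "T' \<subseteq> R" using x y pT pT' unfolding A'_def by auto
      hence pn: "p \<notin> T" "p \<notin> T'" "p' \<notin> T" "p' \<notin> T'" using DR by auto
      have ins: "insert p T = insert p' T'" using e pT pT' unfolding F_def by simp
      hence "p = p'" using pn by blast
      moreover have "T = T'" using ins pn \<open>p = p'\<close> by (metis insert_ident)
      ultimately show "x = y" using pT pT' by simp
    qed
    moreover have "F ` (D \<times> A') = A1"
    proof
      show "F ` (D \<times> A') \<subseteq> A1"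
      proof
        fix S assume "S \<in> F ` (D \<times> A')"
        then obtain p T where p: "p \<in> D" and T: "T \<in> A'" and S: "S = insert p T"
          unfolding F_def by auto
        have TR: "T \<subseteq> R" "card T = q" "inj_on dg T" using T unfolding A'_def by auto
        have pT: "p \<notin> T" using p TR DR by auto
        have finT: "finite T" using TR finR finite_subset by auto
        have "S \<subseteq> B" using p TR S unfolding D_def R_def by auto
        moreover have "card S = Suc q" using S pT finT TR by simp
        moreover have "inj_on dg S"
        proof -
          have "dg p \<notin> dg ` T" using p TR unfolding D_def R_def by auto
          thus ?thesis using S TR pT by simp
        qed
        moreover have "S \<inter> D \<noteq> {}" using S p by auto
        ultimately show "S \<in> A1" unfolding A1_def AA_def B_def by auto
      qed
      show "A1 \<subseteq> F ` (D \<times> A')"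
      proof
        fix S assume S: "S \<in> A1"
        then obtain p where p: "p \<in> S" "p \<in> D" unfolding A1_def by auto
        have SB: "S \<subseteq> B" "card S = Suc q" "inj_on dg S" using S unfolding A1_def AA_def B_def by auto
        define T where "T = S - {p}"
        have "T \<subseteq> R"
        proof
          fix z assume z: "z \<in> T"
          have "z \<in> B" using z SB unfolding T_def by auto
          moreover have "dg z \<noteq> 1"
          proof
            assume "dg z = 1"
            hence "dg z = dg p" using p unfolding D_def by auto
            hence "z = p" using SB(3) z p unfolding T_def inj_on_def by auto
            thus False using z unfolding T_def by auto
          qed
          ultimately show "z \<in> R" unfolding R_def by auto
        qed
        moreover have "card T = q" using SB p unfolding T_def by simp
        moreover have "inj_on dg T" using SB(3) unfolding T_def by (rule inj_on_subset) auto
        ultimately have "T \<in> A'" unfolding A'_def by auto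
        moreover have "S = insert p T" using p unfolding T_def by auto
        ultimately show "S \<in> F ` (D \<times> A')" using p unfolding F_def by force
      qed
    qed
    ultimately have "card A1 = card (D \<times> A')" by (metis card_image)
    thus ?thesis by (simp add: card_cartesian_product)
  qed
  ultimately have "card A1 = Suc n * card (AA n q)" by simp
  moreover have "card (AA (Suc n) (Suc q)) = card A0 + card A1"
    using split disj finA0 finA1 by (simp add: card_Un_disjoint)
  ultimately show ?thesis using cA0 by simp
qed

definition g :: "nat \<Rightarrow> nat \<Rightarrow> nat" where
  "g n q = (if q \<le> n + 1 then stirling (n+1) (n+1-q) else 0)"

lemma g_rec: "g (Suc n) (Suc q) = g n (Suc q) + Suc n * g n q"
proof (cases "q \<le> n")
  case True
  then obtain m where m: "n - q = m" "n + 1 - q = Suc m" by auto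
  have "Suc n + 1 - Suc q = Suc m" using True m by auto
  thus ?thesis using True m unfolding g_def by simp
next
  case False
  thus ?thesis unfolding g_def by auto
qed

lemma AA_g: "card (AA n q) = g n q"
proof (induction n arbitrary: q)
  case 0
  show ?case
  proof (cases q)
    case 0 thus ?thesis using AA_0 unfolding g_def by simp
  next
    case (Suc k) thus ?thesis using AA_0_Suc unfolding g_def by auto
  qed
next
  case (Suc n)
  show ?case
  proof (cases q)
    case 0 thus ?thesis using AA_0 unfolding g_def by simp
  next
    case (Suc k) thus ?thesis using AA_rec g_rec Suc.IH by simp
  qed
qed

theorem proposition7p4:
  fixes q n :: nat
  assumes "q \<ge> 1" and "n \<ge> 1"
  shows "int (u_T_Q01 q n) = (-1) ^ q * signed_stirling1 (int n + 1) (int n + 1 - int q)"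
proof (cases "q \<le> n + 1")
  case True
  have e1: "nat (int n + 1) = n + 1" by simp
  have e2: "nat (int n + 1 - int q) = n + 1 - q" using True by simp
  have e3: "n + 1 - (n + 1 - q) = q" using True by simp
  have "(-1::int) ^ q * (-1) ^ q = 1" by (simp add: power_mult_distrib[symmetric])
  thus ?thesis using True unfolding signed_stirling1_def u_AA AA_g g_def e1 e2 e3
    by (simp add: mult.assoc[symmetric])
next
  case False
  thus ?thesis unfolding signed_stirling1_def u_AA AA_g g_def by simp
qed

end
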